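(* The identities (A6) $x\wedge(y\wedge z)\approx y\wedge(z\wedge x)$, (J5') $x\approx (x'\wedge y)'\wedge(x'\wedge y')'$ form a 2-base for the variety $\mathbb{BA}$ of Boolean algebras (in the language $\langle\wedge,{}'\rangle$).
   Context: Algebras are of type $\langle \wedge, {}'\rangle$ with $\wedge$ binary and ${}'$ unary. The variety $\mathbb{BA}$ of Boolean algebras in this language consists of the algebras $\langle B,\wedge,{}'\rangle$ obtained from Boolean algebras by keeping only meet and complement (equivalently, the variety generated by the two-element Boolean algebra with meet and complement). A base for a variety is an independent set of identities (no identity in the set follows from the others) that defines the variety; an $n$-base is a base with exactly $n$ identities. *)

theory Defs
  imports Main
begin

datatype trm = Var nat | Meet trm trm | Cmp trm

type_synonym eqn = "trm \<times> trm"

fun eval :: "('a \<Rightarrow> 'a \<Rightarrow> 'a) \<Rightarrow> ('a \<Rightarrow> 'a) \<Rightarrow> (nat \<Rightarrow> 'a) \<Rightarrow> trm \<Rightarrow> 'a" where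
  "eval m c \<rho> (Var i) = \<rho> i"
| "eval m c \<rho> (Meet s t) = m (eval m c \<rho> s) (eval m c \<rho> t)"
| "eval m c \<rho> (Cmp s) = c (eval m c \<rho> s)"

definition sat :: "('a \<Rightarrow> 'a \<Rightarrow> 'a) \<Rightarrow> ('a \<Rightarrow> 'a) \<Rightarrow> eqn \<Rightarrow> bool" where
  "sat m c e \<longleftrightarrow> (\<forall>\<rho>. eval m c \<rho> (fst e) = eval m c \<rho> (snd e))"

definition models :: "('a \<Rightarrow> 'a \<Rightarrow> 'a) \<Rightarrow> ('a \<Rightarrow> 'a) \<Rightarrow> eqn set \<Rightarrow> bool" where
  "models m c E \<longleftrightarrow> (\<forall>e\<in>E. sat m c e)"

text \<open>The variety BA: algebras satisfying every identity valid in the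
  two-element Boolean algebra (with meet and complement).\<close>
definition in_BA :: "('a \<Rightarrow> 'a \<Rightarrow> 'a) \<Rightarrow> ('a \<Rightarrow> 'a) \<Rightarrow> bool" where
  "in_BA m c \<longleftrightarrow> (\<forall>e. sat (\<and>) Not e \<longrightarrow> sat m c e)"

definition algebra_on :: "'a set \<Rightarrow> ('a \<Rightarrow> 'a \<Rightarrow> 'a) \<Rightarrow> ('a \<Rightarrow> 'a) \<Rightarrow> bool" where
  "algebra_on A m c \<longleftrightarrow> A \<noteq> {} \<and> (\<forall>x\<in>A. \<forall>y\<in>A. m x y \<in> A) \<and> (\<forall>x\<in>A. c x \<in> A)"

definition sat_on :: "'a set \<Rightarrow> ('a \<Rightarrow> 'a \<Rightarrow> 'a) \<Rightarrow> ('a \<Rightarrow> 'a) \<Rightarrow> eqn \<Rightarrow> bool" where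
  "sat_on A m c e \<longleftrightarrow>
     (\<forall>\<rho>. (\<forall>i. \<rho> i \<in> A) \<longrightarrow> eval m c \<rho> (fst e) = eval m c \<rho> (snd e))"

text \<open>Semantic consequence: every algebra satisfying E satisfies e
  (countermodels taken with carrier a subset of nat; by downward
  Loewenheim-Skolem this loses no generality).\<close>
definition follows :: "eqn set \<Rightarrow> eqn \<Rightarrow> bool" where
  "follows E e \<longleftrightarrow>
     (\<forall>(A::nat set) m c. algebra_on A m c \<longrightarrow> (\<forall>d\<in>E. sat_on A m c d) \<longrightarrow> sat_on A m c e)"

definition independent :: "eqn set \<Rightarrow> bool" where
  "independent E \<longleftrightarrow> (\<forall>e\<in>E. \<not> follows (E - {e}) e)"

definition A6 :: eqn where
  "A6 = (Meet (Var 0) (Meet (Var 1) (Var 2)), Meet (Var 1) (Meet (Var 2) (Var 0)))"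

definition J5' :: eqn where
  "J5' = (Var 0,
          Meet (Cmp (Meet (Cmp (Var 0)) (Var 1)))
               (Cmp (Meet (Cmp (Var 0)) (Cmp (Var 1)))))"

end

theory Submission
  imports Defs
begin

locale ba2 =
  fixes m :: "'a \<Rightarrow> 'a \<Rightarrow> 'a" and c :: "'a \<Rightarrow> 'a"
  assumes a6: "m x (m y z) = m y (m z x)"
    and j5: "x = m (c (m (c x) y)) (c (m (c x) (c y)))"
begin

lemma cc_c_0_4: "(m x1 (m x2 (m x3 x4))) = (m x3 (m (m x4 x2) x1))"
  by (metis a6[of "x2" "x3" "x4"] a6[of "x1" "x3" "(m x4 x2)"])
lemma cc_c_0_5: "(m x1 (m x2 (m x3 x4))) = (m x4 (m (m x2 x3) x1))"
  by (metis a6[of "x4" "x2" "x3"] a6[of "x1" "x4" "(m x2 x3)"])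
lemma cc_c_0_6: "(m x1 (m x2 (m x3 (m x4 x5)))) = (m x4 (m (m (m x5 x3) x2) x1))"
  by (metis cc_c_0_4[of "x2" "x3" "x4" "x5"] a6[of "x1" "x4" "(m (m x5 x3) x2)"])
lemma cc_c_0_7: "(m (m x1 x2) (m x3 x4)) = (m x1 (m (m x2 x4) x3))"
  by (metis a6[of "(m x1 x2)" "x3" "x4"] cc_c_0_4[of "x3" "x4" "x1" "x2"])
lemma cc_c_0_8: "(m x1 (m (m (m x2 x3) x4) x5)) = (m x1 (m x2 (m (m x5 x3) x4)))"
  by (metis cc_c_0_5[of "x5" "x4" "x3" "(m x1 x2)"] cc_c_0_6[of "x5" "x4" "x3" "x1" "x2"] cc_c_0_7[of "x1" "x2" "(m x4 x3)" "x5"] cc_c_0_7[of "x2" "x5" "x4" "x3"])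
lemma cc_c_0_10: "(m x1 (m x2 (m x3 (m x4 x5)))) = (m x4 (m x5 (m (m x1 x3) x2)))"
  by (metis cc_c_0_4[of "x1" "x2" "x4" "(m x5 x3)"] a6[of "x3" "x4" "x5"] cc_c_0_8[of "x4" "x5" "x3" "x2" "x1"])
lemma cc_c_0_11: "(m (c (m (c x1) x2)) (m (c (m (c x1) (c x2))) x3)) = (m x3 x1)"
  by (metis j5[of "x1" "x2"] a6[of "x3" "(c (m (c x1) x2))" "(c (m (c x1) (c x2)))"])
lemma cc_c_0_12: "(m (m x1 (m (m x2 x3) x4)) x5) = (m x4 (m x2 (m x3 (m x1 x5))))"
  by (metis cc_c_0_10 cc_c_0_11 cc_c_0_7)
lemma cc_c_0_13: "(m (m x1 (m x2 x3)) x4) = (m x3 (m (m x1 x4) x2))"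
  by (metis cc_c_0_11 cc_c_0_12 j5)
lemma cc_c_0_14: "(m x1 (m (m x2 x3) x4)) = (m x4 (m (m x1 x3) x2))"
  by (metis a6[of "x1" "x2" "x4"] cc_c_0_13[of "x2" "x4" "x1" "x3"] cc_c_0_13[of "x1" "x2" "x4" "x3"])
lemma cc_c_0_15: "(m x1 (m (m x2 x3) x4)) = (m x1 (m x2 (m x4 x3)))"
  by (metis cc_c_0_14[of "x2" "x4" "x3" "x1"] a6[of "x1" "x2" "(m x4 x3)"])
lemma cc_c_0_16: "(m (m x1 (m x2 x3)) x4) = (m x3 (m x1 (m x2 x4)))"
  by (metis cc_c_0_13[of "x1" "x2" "x3" "x4"] cc_c_0_15[of "x3" "x1" "x4" "x2"])
lemma cc_c_0_17: "(m (m x1 x2) (m x3 x4)) = (m x1 (m x2 (m x3 x4)))"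
  by (metis cc_c_0_7[of "x1" "x2" "x3" "x4"] cc_c_0_15[of "x1" "x2" "x4" "x3"])
lemma cc_c_0_18: "(m (m x1 x2) x3) = (m x1 (m x3 x2))"
  by (metis cc_c_0_11 cc_c_0_16)
lemma cc_c_0_19: "(m x1 (m x2 x3)) = (m x1 (m x3 x2))"
  by (metis cc_c_0_17 cc_c_0_18 j5)
lemma cc_c_0_20: "(m (c (m (c x1) x2)) (m x3 (c (m (c x1) (c x2))))) = (m x1 x3)"
  by (metis j5[of "x1" "x2"] cc_c_0_18[of "(c (m (c x1) x2))" "(c (m (c x1) (c x2)))" "x3"])
lemma cc_c_0_21: "(m (c (m (c x1) (c (c x2)))) x1) = (m (c (m (c x1) x2)) x1)"
  by (metis cc_c_0_11 j5)
lemma cc_c_0_22: "(m x1 x2) = (m x2 x1)"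
  by (metis cc_c_0_11 cc_c_0_19 cc_c_0_20)
lemma cc_c_0_23: "(m x1 (c (m (c x1) (c (c x2))))) = (m x1 (c (m (c x1) x2)))"
  by (metis cc_c_0_21[of "x1" "x2"] cc_c_0_22[of "x1" "(c (m (c x1) (c (c x2))))"] cc_c_0_22[of "x1" "(c (m (c x1) x2))"])
lemma cc_c_0_24: "(m x1 (c (m (c (c x2)) (c x1)))) = (m x1 (c (m (c x1) x2)))"
  by (metis cc_c_0_22[of "(c (c x2))" "(c x1)"] cc_c_0_23[of "x1" "x2"])
lemma cc_c_0_25: "(m (c (m (c x1) x2)) (c (m (c x2) (c x1)))) = x1"
  by (metis j5[of "x1" "x2"] cc_c_0_22[of "(c x2)" "(c x1)"])
lemma cc_c_0_26: "(m x1 (m (c (m (c x1) x2)) (c (m (c (c x2)) x1)))) = (m (c x2) x1)"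
  by (metis cc_c_0_20[of "(c x2)" "x1" "x1"] cc_c_0_24[of "x1" "x2"] a6[of "(c (m (c (c x2)) x1))" "x1" "(c (m (c x1) x2))"])
lemma cc_c_0_27: "(m (c (m x1 (c x2))) (c (m (c x1) (c x2)))) = x2"
  by (metis cc_c_0_25[of "x2" "x1"] cc_c_0_22[of "x1" "(c x2)"])
lemma cc_c_0_29: "(m (c x1) (c (c x1))) = (m x1 (c x1))"
  by (metis cc_c_0_27[of "(c (c x1))" "x1"] cc_c_0_26[of "(c x1)" "(c x1)"] cc_c_0_22[of "(c x1)" "(c (c x1))"] cc_c_0_22[of "x1" "(c x1)"])
lemma cc_c_0_31: "(m (c (m x1 (c x1))) (c (m x1 (c (c x1))))) = (c x1)"
  by (metis cc_c_0_27[of "x1" "(c x1)"] cc_c_0_29[of "x1"] cc_c_0_22[of "(c (m x1 (c x1)))" "(c (m x1 (c (c x1))))"])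
lemma cc_c_0_33: "(c (c x1)) = x1"
  by (metis j5[of "x1" "(c (c x1))"] cc_c_0_31[of "(c x1)"])
lemma cc: "c (c x) = x"
  by (metis cc_c_0_33[of "x"])

lemma comm_c_0_5: "(m x1 (m x2 (m x3 x4))) = (m x3 (m (m x4 x2) x1))"
  by (metis a6[of "x2" "x3" "x4"] a6[of "x1" "x3" "(m x4 x2)"])
lemma comm_c_0_6: "(m (m x1 x2) (m x3 x4)) = (m x1 (m (m x2 x4) x3))"
  by (metis a6[of "(m x1 x2)" "x3" "x4"] comm_c_0_5[of "x3" "x4" "x1" "x2"])
lemma comm_c_0_9: "(m x1 (m (m x2 x3) x4)) = (m x4 (m x2 (m x3 x1)))"
  by (metis a6[of "x4" "x1" "(m x2 x3)"] a6[of "x1" "x2" "x3"])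
lemma comm_c_0_10: "(m x1 (m x2 (m x3 (m x4 x5)))) = (m x4 (m (m (m x5 x3) x2) x1))"
  by (metis comm_c_0_5[of "x2" "x3" "x4" "x5"] a6[of "x1" "x4" "(m (m x5 x3) x2)"])
lemma comm_c_0_11: "(m (c (m x1 x2)) (c (m x1 (c x2)))) = (c x1)"
  by (metis j5[of "(c x1)" "x2"] cc[of "x1"] cc[of "x1"])
lemma comm_c_0_12: "(m x1 (m (m (m x2 x3) x4) x5)) = (m x1 (m x2 (m (m x5 x3) x4)))"
  by (metis comm_c_0_9[of "(m x1 x2)" "x4" "x3" "x5"] comm_c_0_10[of "x5" "x4" "x3" "x1" "x2"] comm_c_0_6[of "x1" "x2" "(m x4 x3)" "x5"] comm_c_0_6[of "x2" "x5" "x4" "x3"])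
lemma comm_c_0_13: "(m (c (m x1 x2)) (m (c (m x1 (c x2))) x3)) = (m x3 (c x1))"
  by (metis comm_c_0_11[of "x1" "x2"] a6[of "x3" "(c (m x1 x2))" "(c (m x1 (c x2)))"])
lemma comm_c_0_14: "(m x1 (m x2 (m x3 (m x4 x5)))) = (m x4 (m x5 (m (m x1 x3) x2)))"
  by (metis comm_c_0_5[of "x1" "x2" "x4" "(m x5 x3)"] a6[of "x3" "x4" "x5"] comm_c_0_12[of "x4" "x5" "x3" "x2" "x1"])
lemma comm_c_0_15: "(m (m (m x1 x2) x3) (c x4)) = (m x1 (m x3 (m x2 (c x4))))"
  by (metis comm_c_0_11 comm_c_0_13 comm_c_0_14)
lemma comm_c_0_16: "(m (m (m x1 x2) x3) x4) = (m x1 (m x3 (m x2 x4)))"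
  by (metis comm_c_0_15[of "x1" "x2" "x3" "(c x4)"] cc[of "x4"] cc[of "x4"])
lemma comm_c_0_17: "(m (m x1 (m x2 (m x3 x4))) x5) = (m x1 (m (m x3 (m x2 x5)) x4))"
  by (metis comm_c_0_16[of "(m x1 x3)" "x2" "x4" "x5"] comm_c_0_16[of "x1" "x3" "x2" "x4"] comm_c_0_6[of "x1" "x3" "x4" "(m x2 x5)"])
lemma comm_c_0_18: "(m (m x1 (m (m x2 x3) x4)) x5) = (m x2 (m x4 (m (m x1 x5) x3)))"
  by (metis comm_c_0_16[of "x2" "x3" "(m x4 x1)" "x5"] a6[of "x1" "(m x2 x3)" "x4"] comm_c_0_6[of "x4" "x1" "x3" "x5"])
lemma comm_c_0_19: "(m x1 (m (m x2 (m x3 x4)) x5)) = (m x2 (m x1 (m (m x3 x4) x5)))"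
  by (metis a6[of "(m x2 x5)" "x1" "x3"] comm_c_0_17[of "x1" "x3" "x2" "x5" "x4"] comm_c_0_16[of "x2" "x5" "(m x1 x3)" "x4"] comm_c_0_6[of "x1" "x3" "x5" "x4"])
lemma comm_c_0_20: "(m x1 (m x2 (m (m x3 x4) x5))) = (m x3 (m x2 (m (m x5 x4) x1)))"
  by (metis comm_c_0_6[of "x3" "x1" "x2" "x5"] comm_c_0_18[of "x3" "x1" "x5" "x2" "x4"] comm_c_0_16[of "x3" "x1" "(m x2 x5)" "x4"] comm_c_0_6[of "x2" "x5" "x1" "x4"])
lemma comm_c_0_21: "(m x1 (m (m x2 (m x3 x4)) x5)) = (m x1 (m x3 (m (m x2 x4) x5)))"
  by (metis a6[of "x2" "x1" "(m (m x3 x4) x5)"] comm_c_0_19[of "x1" "x2" "x3" "x4" "x5"] comm_c_0_12[of "x1" "x3" "x4" "x5" "x2"])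
lemma comm_c_0_22: "(m x1 (m x2 (m (m x3 x4) x5))) = (m x1 (m x3 (m (m x5 x4) x2)))"
  by (metis comm_c_0_9[of "x1" "x3" "(m x2 x4)" "x5"] comm_c_0_21[of "x1" "x3" "x2" "x4" "x5"] comm_c_0_20[of "x1" "x3" "x5" "x4" "x2"])
lemma comm_c_0_23: "(m x1 (m x2 (m (m x3 x4) x5))) = (m x1 (m x2 (m x3 (m x5 x4))))"
  by (metis comm_c_0_22[of "x1" "x2" "x3" "x4" "x5"] a6[of "x2" "x3" "(m x5 x4)"])
lemma comm_c_0_24: "(m (m x1 (m x2 x3)) (c x4)) = (m x1 (m x2 (m x3 (c x4))))"
  by (metis comm_c_0_13 comm_c_0_16 comm_c_0_23)
lemma comm_c_0_25: "(m (m x1 (m x2 x3)) x4) = (m x1 (m x2 (m x3 x4)))"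
  by (metis comm_c_0_24[of "x1" "x2" "x3" "(c x4)"] cc[of "x4"] cc[of "x4"])
lemma comm_c_0_26: "(m (m x1 (c x2)) x3) = (m x1 (m x3 (c x2)))"
  by (metis comm_c_0_11 comm_c_0_13 comm_c_0_25)
lemma comm_c_0_27: "(m (c (m x1 (c x2))) (c (m x1 x2))) = (c x1)"
  by (metis comm_c_0_11[of "x1" "(c x2)"] cc[of "x2"])
lemma comm_c_0_29: "(m (m x1 x2) x3) = (m x1 (m x3 x2))"
  by (metis comm_c_0_26[of "x1" "(c x2)" "x3"] cc[of "x2"] cc[of "x2"])
lemma comm_c_0_30: "(m (c (m x1 x2)) (m x3 (c (m x1 (c x2))))) = (m x3 (c x1))"
  by (metis comm_c_0_27[of "x1" "x2"] a6[of "(c (m x1 x2))" "x3" "(c (m x1 (c x2)))"])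
lemma comm_c_0_32: "(m x1 (c x2)) = (m (c x2) x1)"
  by (metis comm_c_0_11 comm_c_0_29 comm_c_0_30)
lemma comm_c_0_34: "(m x1 x2) = (m x2 x1)"
  by (metis comm_c_0_32[of "x2" "(c x1)"] cc[of "x1"] cc[of "x1"])
lemma comm: "m x y = m y x"
  by (metis comm_c_0_34[of "x" "y"])

lemma assoc: "m (m x y) z = m x (m y z)"
  by (metis comm[of "(m x y)" "z"] a6[of "z" "x" "y"])

lemma zz_c_0_7: "(m (c (m x1 x2)) (c (m x1 (c x2)))) = (c x1)"
  by (metis j5[of "(c x1)" "x2"] cc[of "x1"] cc[of "x1"])
lemma zz_c_0_10: "(m (c (m x1 x2)) (c (m (c x2) x1))) = (c x1)"
  by (metis zz_c_0_7[of "x1" "x2"] comm[of "(c x2)" "x1"])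
lemma zz_c_0_11: "(m x1 (m x2 x3)) = (m x2 (m x1 x3))"
  by (metis comm[of "x1" "x2"] assoc[of "x1" "x2" "x3"] assoc[of "x2" "x1" "x3"])
lemma zz_c_0_13: "(m (c (m x1 x2)) (c (m (c x1) x2))) = (c x2)"
  by (metis zz_c_0_10[of "x2" "x1"] comm[of "x1" "x2"])
lemma zz_c_0_14: "(m (c (m x1 x2)) (m x3 (c (m x1 (c x2))))) = (m x3 (c x1))"
  by (metis zz_c_0_7[of "x1" "x2"] zz_c_0_11[of "(c (m x1 x2))" "x3" "(c (m x1 (c x2)))"])
lemma zz_c_0_16: "(m (c (m x1 x2)) (m x3 (c (m (c x1) x2)))) = (m x3 (c x2))"
  by (metis zz_c_0_13[of "x1" "x2"] zz_c_0_11[of "(c (m x1 x2))" "x3" "(c (m (c x1) x2))"])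
lemma zz_c_0_17: "(m x1 (c (m (c x2) x1))) = (m x2 (c (m (c x1) x2)))"
  by (metis cc comm zz_c_0_10 zz_c_0_14)
lemma zz_c_0_18: "(m (c (m x1 x2)) (m x3 (c (m (c x2) x1)))) = (m x3 (c x1))"
  by (metis zz_c_0_10[of "x1" "x2"] zz_c_0_11[of "(c (m x1 x2))" "x3" "(c (m (c x2) x1))"])
lemma zz_c_0_20: "(m x1 (c x1)) = (m x2 (c x2))"
  by (metis zz_c_0_16 zz_c_0_17 zz_c_0_18)
lemma zz: "m x (c x) = m y (c y)"
  by (metis zz_c_0_20)

lemma one_c_0_11: "(m (c (m x1 x2)) (c (m x1 (c x2)))) = (c x1)"
  by (metis j5[of "(c x1)" "x2"] cc[of "x1"] cc[of "x1"])
lemma one_c_0_12: "(m x1 (c x1)) = (m x2 (m x3 (c (m x2 x3))))"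
  by (metis assoc zz)
lemma one_c_0_13: "(m (c (m x1 x1)) (c (m x2 (c x2)))) = (c x1)"
  by (metis one_c_0_11 zz)
lemma one_c_0_14: "(m x1 (c x1)) = (m x2 (m x2 (c x2)))"
  by (metis assoc one_c_0_12 one_c_0_13)
lemma one_c_0_17: "(m x1 (c x1)) = (m x2 (m x3 (c x3)))"
  by (metis one_c_0_14 zz)
lemma one_c_0_19: "(m x1 (m x2 x3)) = (m x2 (m x1 x3))"
  by (metis comm[of "x1" "x2"] assoc[of "x1" "x2" "x3"] assoc[of "x2" "x1" "x3"])
lemma one_c_0_20: "(m x1 (c (m x1 (m (c x2) (c (m x1 x2)))))) = (m x1 x2)"
  by (metis assoc cc comm one_c_0_11)
lemma one_c_0_21: "(m x1 (c x1)) = (m x2 (m (c x2) x3))"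
  by (metis assoc comm one_c_0_17)
lemma one_c_0_23: "(m (c (m x1 x2)) (m x3 (c (m x1 (c x2))))) = (m x3 (c x1))"
  by (metis one_c_0_11[of "x1" "x2"] one_c_0_19[of "(c (m x1 x2))" "x3" "(c (m x1 (c x2)))"])
lemma one_c_0_24: "(m x1 (c (m x2 (c x2)))) = (m x1 x1)"
  by (metis one_c_0_20 one_c_0_21)
lemma one_c_0_26: "(m (c (m x1 x1)) (m x2 x2)) = (m x2 (c x1))"
  by (metis one_c_0_23 one_c_0_24)
lemma one_c_0_28: "(m x1 (m (c (m x2 x2)) x1)) = (m x1 (c x2))"
  by (metis one_c_0_19[of "x1" "(c (m x2 x2))" "x1"] one_c_0_26[of "x2" "x1"])
lemma one_c_0_31: "(m x1 (m x1 (m x1 (c x2)))) = (m x1 (m x1 (c x2)))"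
  by (metis one_c_0_26[of "x2" "x1"] assoc[of "x1" "x1" "(m x1 (c x2))"] one_c_0_28[of "(m x1 x1)" "x2"] assoc[of "x1" "x1" "(c x2)"])
lemma one_c_0_32: "(m x1 (m x1 (c (m x2 x2)))) = (m x1 (c x2))"
  by (metis comm[of "(m x1 x1)" "(c (m x2 x2))"] assoc[of "x1" "x1" "(c (m x2 x2))"] one_c_0_26[of "x2" "x1"])
lemma one_c_0_34: "(m x1 (m x1 (c x2))) = (m x1 (c x2))"
  by (metis one_c_0_31[of "x1" "(m x2 x2)"] one_c_0_32[of "x1" "x2"] one_c_0_32[of "x1" "x2"])
lemma one_c_0_36: "(m (c (m x1 x2)) (c (m (c x2) x1))) = (c x1)"
  by (metis one_c_0_11[of "x1" "x2"] comm[of "(c x2)" "x1"])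
lemma one_c_0_37: "(m x1 (m x2 x3)) = (m x3 (m x2 x1))"
  by (metis comm[of "x2" "x3"] a6[of "x1" "x3" "x2"])
lemma one_c_0_38: "(m x1 (m x1 x2)) = (m x1 x2)"
  by (metis one_c_0_34[of "x1" "(c x2)"] cc[of "x2"] cc[of "x2"])
lemma one_c_0_40: "(m (c (m x1 x2)) (c (m (c x1) x2))) = (c x2)"
  by (metis one_c_0_36[of "x2" "x1"] comm[of "x1" "x2"])
lemma one_c_0_41: "(m x1 (m x2 x2)) = (m x2 x1)"
  by (metis one_c_0_37[of "x1" "x2" "x2"] one_c_0_38[of "x2" "x1"])
lemma one_c_0_43: "(c (m x1 x1)) = (c x1)"
  by (metis one_c_0_11 one_c_0_40 one_c_0_41)
lemma one_c_0_45: "(m x1 x1) = x1"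
  by (metis one_c_0_43[of "x1"] cc[of "(m x1 x1)"] cc[of "x1"])
lemma one: "m x (c (m y (c y))) = x"
  by (metis a6 assoc cc comm j5 one_c_0_20 one_c_0_45 zz)

lemma dist_c_0_10: "(c (m (c x1) (c x1))) = x1"
  by (metis j5 one)
lemma dist_c_0_12: "(c (m x1 x1)) = (c x1)"
  by (metis cc[of "x1"] cc[of "x1"] dist_c_0_10[of "(c x1)"])
lemma dist_c_0_14: "(m x1 x1) = x1"
  by (metis dist_c_0_12[of "x1"] cc[of "(m x1 x1)"] cc[of "x1"])
lemma dist_c_0_15: "(m x1 (m x1 x2)) = (m x1 x2)"
  by (metis assoc[of "x1" "x1" "x2"] dist_c_0_14[of "x1"])
lemma dist_c_0_18: "(m x1 (c (m (c x1) x2))) = x1"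
  by (metis comm dist_c_0_15 j5)
lemma dist_c_0_19: "(m x1 (m x2 x1)) = (m x2 x1)"
  by (metis dist_c_0_15[of "x1" "x2"] comm[of "x2" "x1"] comm[of "x2" "x1"])
lemma dist_c_0_20: "(m x1 (m x2 (c x2))) = (m x2 (c x2))"
  by (metis dist_c_0_15 zz)
lemma dist_c_0_21: "(m x1 (c (m x2 (c x1)))) = x1"
  by (metis dist_c_0_18[of "x1" "(m x2 (c x1))"] dist_c_0_19[of "(c x1)" "x2"])
lemma dist_c_0_22: "(m x1 (m (c x1) x2)) = (m x1 (c x1))"
  by (metis dist_c_0_20[of "x2" "x1"] comm[of "(m x1 (c x1))" "x2"] assoc[of "x1" "(c x1)" "x2"])
lemma dist_c_0_23: "(m x1 (m (c (m x2 (c x1))) x3)) = (m x1 x3)"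
  by (metis dist_c_0_21[of "x1" "x2"] assoc[of "x1" "(c (m x2 (c x1)))" "x3"])
lemma dist_c_0_24: "(m x1 (m x2 (c x1))) = (m x1 (c x1))"
  by (metis dist_c_0_22[of "x1" "(m x2 (c x1))"] dist_c_0_19[of "(c x1)" "x2"])
lemma dist_c_0_25: "(m (c x1) (c (m x1 x2))) = (c x1)"
  by (metis dist_c_0_18[of "(c x1)" "x2"] cc[of "x1"])
lemma dist_c_0_26: "(m x1 (c (m (c x2) x1))) = (m x1 x2)"
  by (metis cc dist_c_0_23 j5)
lemma dist_c_0_28: "(m x1 (m x2 (c (m x1 x2)))) = (m x1 (c x1))"
  by (metis assoc dist_c_0_24 dist_c_0_25)
lemma dist_c_0_29: "(m x1 (c (m x2 x1))) = (m x1 (c x2))"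
  by (metis cc[of "x2"] dist_c_0_26[of "x1" "(c x2)"])
lemma dist_c_0_30: "(m x1 (m x2 (c (m x2 x1)))) = (m x2 (c x2))"
  by (metis dist_c_0_28[of "x2" "x1"] comm[of "(c (m x2 x1))" "x1"] a6[of "x1" "x2" "(c (m x2 x1))"])
lemma dist_c_0_31: "(m (c x1) (c (m x2 x1))) = (c x1)"
  by (metis dist_c_0_21[of "(c x1)" "x2"] cc[of "x1"])
lemma dist_c_0_32: "(m x1 (m x2 x3)) = (m x2 (m x1 x3))"
  by (metis comm[of "x1" "x2"] assoc[of "x1" "x2" "x3"] assoc[of "x2" "x1" "x3"])
lemma dist_c_0_33: "(m x1 (c (m x1 x2))) = (m x1 (c x2))"
  by (metis comm[of "x1" "x2"] dist_c_0_29[of "x1" "x2"])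
lemma dist_c_0_34: "(m x1 (m x2 (c (m x1 x3)))) = (m x2 (m x1 (c x3)))"
  by (metis dist_c_0_32[of "x1" "x2" "(c (m x1 x3))"] dist_c_0_33[of "x1" "x3"])
lemma dist_c_0_35: "(m x1 (c (m x2 (m x1 x3)))) = (m x1 (c (m x2 x3)))"
  by (metis dist_c_0_32[of "x2" "x1" "x3"] dist_c_0_33[of "x1" "(m x2 x3)"])
lemma dist_c_0_37: "(m x1 (m (c (m (c x1) x2)) x3)) = (m x1 x3)"
  by (metis dist_c_0_18[of "x1" "x2"] assoc[of "x1" "(c (m (c x1) x2))" "x3"])
lemma dist_c_0_38: "(m x1 (c (m x2 (c (m x1 x3))))) = (m x1 (c (m x2 (c x3))))"
  by (metis dist_c_0_34[of "x1" "x2" "x3"] dist_c_0_33[of "x1" "(m x2 (c (m x1 x3)))"] dist_c_0_35[of "x1" "x2" "(c x3)"])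
lemma dist_c_0_40: "(m (c (m x1 x2)) (c (m (c (m (c x1) x3)) x2))) = (c (m (c (m (c x1) x3)) x2))"
  by (metis comm dist_c_0_31 dist_c_0_37)
lemma dist_c_0_41: "(m x1 (c (m (c (m x1 x2)) x3))) = (m x1 (c (m x3 (c x2))))"
  by (metis comm[of "(c (m x1 x2))" "x3"] dist_c_0_38[of "x1" "x3" "x2"])
lemma dist_c_0_43: "(c (m (c (m x1 x2)) (c (m x1 x3)))) = (m x1 (c (m (c x3) (c x2))))"
  by (metis cc dist_c_0_25 dist_c_0_38 dist_c_0_40 dist_c_0_41)
lemma dist: "m x (c (m (c y) (c z))) = c (m (c (m x y)) (c (m x z)))"
  by (metis dist_c_0_43[of "x" "z" "y"] comm[of "(c (m x y))" "(c (m x z))"])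

lemma zero_c_0_13: "(m x1 (c (m (c x2) x1))) = (m x1 x2)"
  by (metis one[of "(c (m x1 x2))" "x1"] dist[of "x1" "x2" "(c x1)"] cc[of "x1"] cc[of "(m x1 x2)"])
lemma zero_c_0_16: "(m x1 x1) = x1"
  by (metis one[of "(c (c x1))" "(c x1)"] zero_c_0_13[of "(c (c x1))" "x1"] cc[of "x1"] cc[of "x1"])
lemma zero_c_0_18: "(m x1 (m x1 x2)) = (m x1 x2)"
  by (metis assoc[of "x1" "x1" "x2"] zero_c_0_16[of "x1"])
lemma zero: "m x (m u (c u)) = m u (c u)"
  by (metis assoc zero_c_0_18 zz)

lemma sh_var: "a = (c (m (c (m a (c (m u (c u))))) (c (m (c a) (m u (c u))))))"
  by (metis cc[of "a"] one[of "(c a)" "u"] zero[of "(c a)" "u"] one[of "a" "u"])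

lemma sh_oth: "b = (c (m (c (m a b)) (c (m (c a) b))))"
  by (metis cc comm dist one)

lemma idem_c_0_12: "(m x1 x1) = x1"
  by (metis cc one sh_oth zz)
lemma idem: "m x x = x"
  by (metis idem_c_0_12[of "x"])

lemma jz: "(c (m (c x) (c (m u (c u))))) = x"
  by (metis one[of "(c x)" "u"] cc[of "x"])

lemma distr: "m (c (m (c y) (c z))) x = (c (m (c (m y x)) (c (m z x))))"
  by (metis dist[of "x" "y" "z"] comm[of "(c (m (c y) (c z)))" "x"] comm[of "z" "x"] comm[of "y" "x"])

lemma h1a_c_0_11: "(m x1 (m x2 x3)) = (m x3 (m x1 x2))"
  by (metis assoc[of "x1" "x2" "x3"] comm[of "x3" "(m x1 x2)"])
lemma h1a_c_0_12: "(m x1 (m x1 x2)) = (m x1 x2)"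
  by (metis assoc[of "x1" "x1" "x2"] idem[of "x1"])
lemma h1a: "m (m a p) (m a r) = m a (m p r)"
  by (metis h1a_c_0_11[of "a" "p" "r"] h1a_c_0_11[of "a" "r" "(m a p)"] h1a_c_0_12[of "a" "(m p r)"])

lemma h1b_c_0_12: "(m x1 (m (c x1) x2)) = (m x1 (c x1))"
  by (metis zero[of "x2" "x1"] comm[of "(m x1 (c x1))" "x2"] assoc[of "x1" "(c x1)" "x2"])
lemma h1b_c_0_13: "(m x1 (m x2 x3)) = (m x3 (m x1 x2))"
  by (metis assoc[of "x1" "x2" "x3"] comm[of "x3" "(m x1 x2)"])
lemma h1b_c_0_15: "(m x1 (m x2 (m x3 (c x1)))) = (m x1 (c x1))"
  by (metis h1b_c_0_12[of "x1" "(m x2 x3)"] h1b_c_0_13[of "x2" "x3" "(c x1)"])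
lemma h1b: "m (m a p) (m (c a) s) = m u (c u)"
  by (metis assoc comm h1b_c_0_15 zz)

lemma h1_c_0_14: "(m x1 (m x1 x2)) = (m x1 x2)"
  by (metis assoc[of "x1" "x1" "x2"] idem[of "x1"])
lemma h1_c_0_18: "(m x1 (m x2 (m x1 x3))) = (m x1 (m x2 x3))"
  by (metis assoc[of "x1" "x2" "(m x1 x3)"] h1a[of "x1" "x2" "x3"])
lemma h1_c_0_20: "(m x1 (m x2 x1)) = (m x2 x1)"
  by (metis h1_c_0_14[of "x1" "x2"] comm[of "x2" "x1"] comm[of "x2" "x1"])
lemma h1_c_0_22: "(m x1 (c (m (c (m x1 x2)) (c x3)))) = (m x1 (c (m (c x2) (c x3))))"
  by (metis h1_c_0_14[of "x1" "x2"] dist[of "x1" "(m x1 x2)" "x3"] dist[of "x1" "x2" "x3"])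
lemma h1_c_0_23: "(m x1 (c (m (c (m x2 (m x1 x3))) (c x4)))) = (m x1 (c (m (c (m x2 x3)) (c x4))))"
  by (metis h1_c_0_18[of "x1" "x2" "x3"] dist[of "x1" "(m x2 (m x1 x3))" "x4"] dist[of "x1" "(m x2 x3)" "x4"])
lemma h1_c_0_25: "(m x1 (m x2 x3)) = (m x3 (m x1 x2))"
  by (metis assoc[of "x1" "x2" "x3"] comm[of "x3" "(m x1 x2)"])
lemma h1_c_0_26: "(m x1 (m (c x1) x2)) = (m x1 (c x1))"
  by (metis zero[of "x2" "x1"] comm[of "(m x1 (c x1))" "x2"] assoc[of "x1" "(c x1)" "x2"])
lemma h1_c_0_27: "(m x1 (m x2 (m x3 x1))) = (m x2 (m x3 x1))"
  by (metis h1_c_0_20[of "x1" "(m x2 x3)"] assoc[of "x2" "x3" "x1"] assoc[of "x2" "x3" "x1"])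
lemma h1_c_0_29: "(m x1 (m x2 (c (m (c (m x1 x3)) (c x4))))) = (m x1 (m x2 (c (m (c x3) (c x4)))))"
  by (metis assoc[of "x1" "x2" "x3"] assoc[of "x1" "x2" "(c (m (c (m x1 (m x2 x3))) (c x4)))"] h1_c_0_23[of "x2" "x1" "x3" "x4"] h1_c_0_22[of "(m x1 x2)" "x3" "x4"] assoc[of "x1" "x2" "(c (m (c x3) (c x4)))"])
lemma h1_c_0_30: "(c (m (c (m x1 x2)) (c (m x3 (m x4 x2))))) = (m (c (m (c x1) (c (m x3 x4)))) x2)"
  by (metis assoc[of "x3" "x4" "x2"] distr[of "x1" "(m x3 x4)" "x2"])
lemma h1_c_0_31: "(m (c x1) (m x2 (m x3 x1))) = (m x1 (c x1))"
  by (metis h1_c_0_26[of "x1" "(m x2 x3)"] h1_c_0_25[of "(c x1)" "(m x2 x3)" "x1"] assoc[of "x2" "x3" "x1"])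
lemma h1_c_0_34: "(m x1 (m x2 x3)) = (m x3 (m x2 x1))"
  by (metis h1_c_0_25[of "x2" "x1" "x3"] h1_c_0_18[of "x1" "x2" "x3"] h1_c_0_27[of "x1" "x3" "x2"])
lemma h1_c_0_36: "(m x1 (m x2 (c (m (c x3) (c (m (c x1) x4)))))) = (m x3 (m x2 x1))"
  by (metis cc h1_c_0_30 h1_c_0_31 h1_c_0_34 one)
lemma h1_c_0_37: "(m x1 (m x2 x3)) = (m x2 (m x1 x3))"
  by (metis comm[of "x1" "x2"] assoc[of "x1" "x2" "x3"] assoc[of "x2" "x1" "x3"])
lemma h1: "m (m a p) (c (m (c (m a r)) (c (m (c a) s)))) = m a (m p r)"
  by (metis h1_c_0_36[of "a" "p" "r" "s"] h1_c_0_29[of "a" "p" "r" "(m (c a) s)"] assoc[of "a" "p" "(c (m (c (m a r)) (c (m (c a) s))))"] h1_c_0_34[of "a" "p" "r"])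

lemma h2_c_0_18: "(m x1 (m x1 x2)) = (m x1 x2)"
  by (metis assoc[of "x1" "x1" "x2"] idem[of "x1"])
lemma h2_c_0_21: "(m x1 (c (m (c x2) x1))) = (m x1 x2)"
  by (metis one[of "(c (m x1 x2))" "x1"] dist[of "x1" "x2" "(c x1)"] cc[of "x1"] cc[of "(m x1 x2)"])
lemma h2_c_0_23: "(m x1 (m x2 x1)) = (m x2 x1)"
  by (metis h2_c_0_18[of "x1" "x2"] comm[of "x2" "x1"] comm[of "x2" "x1"])
lemma h2_c_0_24: "(m x1 (m x2 (m x1 x3))) = (m x1 (m x2 x3))"
  by (metis assoc[of "x1" "x2" "(m x1 x3)"] h1a[of "x1" "x2" "x3"])
lemma h2_c_0_25: "(m x1 (c (m x2 x1))) = (m x1 (c x2))"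
  by (metis cc[of "x2"] h2_c_0_21[of "x1" "(c x2)"])
lemma h2_c_0_28: "(m x1 (m x2 x3)) = (m x2 (m x1 x3))"
  by (metis assoc[of "x2" "(m x1 x2)" "x3"] h2_c_0_23[of "x2" "x1"] assoc[of "x1" "x2" "x3"] assoc[of "x1" "x2" "x3"] h2_c_0_24[of "x2" "x1" "x3"])
lemma h2_c_0_29: "(m x1 (c (m x1 x2))) = (m x1 (c x2))"
  by (metis comm[of "x1" "x2"] h2_c_0_25[of "x1" "x2"])
lemma h2_c_0_30: "(m x1 (m (c x1) x2)) = (m x1 (c x1))"
  by (metis zero[of "x2" "x1"] comm[of "(m x1 (c x1))" "x2"] assoc[of "x1" "(c x1)" "x2"])
lemma h2_c_0_32: "(m x1 (m x2 (c (m x3 x1)))) = (m x2 (m x1 (c x3)))"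
  by (metis h2_c_0_28[of "x1" "x2" "(c (m x3 x1))"] h2_c_0_25[of "x1" "x3"])
lemma h2_c_0_33: "(m x1 (c (m x2 (m x1 x3)))) = (m x1 (c (m x2 x3)))"
  by (metis h2_c_0_24[of "x1" "x2" "x3"] h2_c_0_29[of "x1" "(m x2 (m x1 x3))"] h2_c_0_29[of "x1" "(m x2 x3)"])
lemma h2_c_0_34: "(m x1 (c (m (c x1) x2))) = x1"
  by (metis h2_c_0_29[of "x1" "(c x1)"] h2_c_0_30[of "x1" "x2"] h2_c_0_29[of "x1" "(m (c x1) x2)"] cc[of "x1"] idem[of "x1"])
lemma h2_c_0_36: "(m x1 (c (m x2 (c (m x3 x1))))) = (m x1 (c (m x2 (c x3))))"
  by (metis h2_c_0_32[of "x1" "x2" "x3"] h2_c_0_29[of "x1" "(m x2 (c (m x3 x1)))"] h2_c_0_33[of "x1" "x2" "(c x3)"])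
lemma h2_c_0_37: "(m (c x1) (c (m x1 x2))) = (c x1)"
  by (metis h2_c_0_34[of "(c x1)" "x2"] cc[of "x1"])
lemma h2_c_0_39: "(m (c x1) (c (m x2 (c (m x1 x3))))) = (m (c x1) (c x2))"
  by (metis h2_c_0_37[of "x1" "x3"] h2_c_0_33[of "(c x1)" "x2" "(c (m x1 x3))"] h2_c_0_25[of "(c x1)" "x2"])
lemma h2: "m (m (c a) q) (c (m (c (m a r)) (c (m (c a) s)))) = m (c a) (m q s)"
  by (metis assoc cc comm h2_c_0_28 h2_c_0_36 h2_c_0_39)

lemma l29_c_0_11: "(m x1 (c (m (c x2) x1))) = (m x1 x2)"
  by (metis one[of "(c (m x1 x2))" "x1"] dist[of "x1" "x2" "(c x1)"] cc[of "x1"] cc[of "(m x1 x2)"])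
lemma l29_c_0_13: "(m x1 (c (m x2 x1))) = (m x1 (c x2))"
  by (metis cc[of "x2"] l29_c_0_11[of "x1" "(c x2)"])
lemma l29_c_0_16: "(m x1 (c (m x1 x2))) = (m x1 (c x2))"
  by (metis comm[of "x1" "x2"] l29_c_0_13[of "x1" "x2"])
lemma l29: "m x (c (m x y)) = m x (c y)"
  by (metis l29_c_0_16[of "x" "y"])

lemma lk1_c_0_10: "(m x1 (m x1 x2)) = (m x1 x2)"
  by (metis assoc[of "x1" "x1" "x2"] idem[of "x1"])
lemma lk1_c_0_13: "(m x1 (c (m (c (m x1 x2)) (c x3)))) = (m x1 (c (m (c x2) (c x3))))"
  by (metis lk1_c_0_10[of "x1" "x2"] dist[of "x1" "(m x1 x2)" "x3"] dist[of "x1" "x2" "x3"])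
lemma lk1_c_0_14: "(m x1 (m x2 (c (m (c (m x1 x3)) (c (m (c x1) x4)))))) = (m x1 (m x2 x3))"
  by (metis h1[of "x1" "x2" "x3" "x4"] assoc[of "x1" "x2" "(c (m (c (m x1 x3)) (c (m (c x1) x4))))"])
lemma lk1_c_0_16: "(m x1 (c (m (c x2) (c (m (c x1) x3))))) = (m x1 x2)"
  by (metis lk1_c_0_14[of "x1" "x1" "x2" "x3"] lk1_c_0_13[of "x1" "x2" "(m (c x1) x3)"] lk1_c_0_10[of "x1" "(c (m (c x2) (c (m (c x1) x3))))"] lk1_c_0_10[of "x1" "x2"])
lemma lk1: "m a (c (m (c (m a p)) (c (m (c a) q)))) = m a p"
  by (metis lk1_c_0_16[of "a" "p" "q"] lk1_c_0_13[of "a" "p" "(m (c a) q)"])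

lemma lk2_c_0_18: "(m x1 (m x1 x2)) = (m x1 x2)"
  by (metis assoc[of "x1" "x1" "x2"] idem[of "x1"])
lemma lk2_c_0_19: "(c (m (c x1) (c (m x1 x2)))) = x1"
  by (metis cc comm dist one zero)
lemma lk2_c_0_22: "(m x1 (m x2 x1)) = (m x2 x1)"
  by (metis lk2_c_0_18[of "x1" "x2"] comm[of "x2" "x1"] comm[of "x2" "x1"])
lemma lk2_c_0_23: "(c (m (c (m x1 x2)) (c (m x3 x1)))) = (m x1 (c (m (c x2) (c x3))))"
  by (metis comm[of "x3" "x1"] dist[of "x1" "x2" "x3"])
lemma lk2_c_0_24: "(m (c x1) (c (m x1 x2))) = (c x1)"
  by (metis lk2_c_0_19[of "x1" "x2"] cc[of "(m (c x1) (c (m x1 x2)))"])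
lemma lk2_c_0_25: "(m x1 (c (m (c x2) x1))) = (m x1 x2)"
  by (metis one[of "(c (m x1 x2))" "x1"] dist[of "x1" "x2" "(c x1)"] cc[of "x1"] cc[of "(m x1 x2)"])
lemma lk2_c_0_27: "(m x1 (c (m (c x2) (c (m x3 x1))))) = (m x1 (c (m (c x2) (c x3))))"
  by (metis lk2_c_0_22[of "x1" "x3"] dist[of "x1" "x2" "(m x3 x1)"] lk2_c_0_23[of "x1" "x2" "x3"])
lemma lk2_c_0_28: "(m (c x1) (m (c (m x1 x2)) x3)) = (m (c x1) x3)"
  by (metis lk2_c_0_24[of "x1" "x2"] assoc[of "(c x1)" "(c (m x1 x2))" "x3"])
lemma lk2_c_0_29: "(m x1 (c (m x2 x1))) = (m x1 (c x2))"
  by (metis cc[of "x2"] lk2_c_0_25[of "x1" "(c x2)"])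
lemma lk2_c_0_31: "(m (c x1) (c (m x2 (c (m x1 x3))))) = (m (c x1) (c x2))"
  by (metis lk2_c_0_28 lk2_c_0_29)
lemma lk2: "m (c a) (c (m (c (m a p)) (c (m (c a) q)))) = m (c a) q"
  by (metis cc comm lk2_c_0_27 lk2_c_0_31)

lemma sh_meet: "m (c (m (c (m a p)) (c (m (c a) q)))) (c (m (c (m a r)) (c (m (c a) s))))
   = c (m (c (m a (m p r))) (c (m (c a) (m q s))))"
  by (simp only: distr h1 h2)

lemma sh_cmp: "c (c (m (c (m a p)) (c (m (c a) q)))) = c (m (c (m a (c p))) (c (m (c a) (c q))))"
proof -
  let ?K = "c (m (c (m a p)) (c (m (c a) q)))"
  have e1: "m a (c ?K) = m a (c p)" by (metis l29 lk1)
  have e2: "m (c a) (c ?K) = m (c a) (c q)" by (metis l29 lk2)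
  have "c ?K = c (m (c (m a (c ?K))) (c (m (c a) (c ?K))))" by (rule sh_oth)
  also have "\<dots> = c (m (c (m a (c p))) (c (m (c a) (c q))))" by (simp only: e1 e2)
  finally show ?thesis .
qed

definition zr where "zr = m undefined (c undefined)"

lemma shannon:
  "eval m c \<rho> t = c (m (c (m (\<rho> i) (eval m c (\<rho>(i := c zr)) t))) (c (m (c (\<rho> i)) (eval m c (\<rho>(i := zr)) t))))"
proof (induction t)
  case (Var j)
  show ?case
  proof (cases "j = i")
    case True
    then show ?thesis using sh_var[of "\<rho> i" undefined] by (simp add: zr_def)
  next
    case False
    then show ?thesis using sh_oth[of "\<rho> j" "\<rho> i"] by simp
  qed
next
  case (Meet t1 t2)
  show ?case by (simp only: eval.simps) (subst Meet.IH(1), subst Meet.IH(2), rule sh_meet)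
next
  case (Cmp t)
  show ?case by (simp only: eval.simps) (subst Cmp.IH, rule sh_cmp)
qed

lemma two_valued:
  assumes "\<forall>i. \<rho> i = zr \<or> \<rho> i = c zr"
  shows "eval m c \<rho> t = (if eval (\<and>) Not (\<lambda>i. \<rho> i = c zr) t then c zr else zr)"
proof (induction t)
  case (Var i)
  then show ?case using assms by (cases "\<rho> i = c zr") auto
next
  case (Meet t1 t2)
  have a: "m (c zr) (c zr) = c zr" by (rule idem)
  have b: "m (c zr) zr = zr" unfolding zr_def by (metis zero comm)
  have d: "m zr (c zr) = zr" unfolding zr_def by (rule zz)
  have e: "m zr zr = zr" by (rule idem)
  show ?case using a b d e by (simp add: Meet.IH)
next
  case (Cmp t)
  then show ?case by (simp add: cc)
qed

lemma finite_case:
  assumes sat: "\<forall>\<sigma>. eval (\<and>) Not \<sigma> s = eval (\<and>) Not \<sigma> t"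
  shows "finite S \<Longrightarrow> \<forall>\<rho>. (\<forall>i. i \<notin> S \<longrightarrow> \<rho> i = zr \<or> \<rho> i = c zr) \<longrightarrow> eval m c \<rho> s = eval m c \<rho> t"
proof (induction S rule: finite_induct)
  case empty
  show ?case
  proof (intro allI impI)
    fix \<rho> :: "nat \<Rightarrow> 'a"
    assume h: "\<forall>i. i \<notin> {} \<longrightarrow> \<rho> i = zr \<or> \<rho> i = c zr"
    then have h': "\<forall>i. \<rho> i = zr \<or> \<rho> i = c zr" by simp
    show "eval m c \<rho> s = eval m c \<rho> t"
      using two_valued[OF h', of s] two_valued[OF h', of t] sat by simp
  qed
next
  case (insert i S)
  show ?case
  proof (intro allI impI)
    fix \<rho> :: "nat \<Rightarrow> 'a"
    assume h: "\<forall>j. j \<notin> insert i S \<longrightarrow> \<rho> j = zr \<or> \<rho> j = c zr"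
    have h1: "\<forall>j. j \<notin> S \<longrightarrow> (\<rho>(i := c zr)) j = zr \<or> (\<rho>(i := c zr)) j = c zr" using h by auto
    have h2: "\<forall>j. j \<notin> S \<longrightarrow> (\<rho>(i := zr)) j = zr \<or> (\<rho>(i := zr)) j = c zr" using h by auto
    have q1: "eval m c (\<rho>(i := c zr)) s = eval m c (\<rho>(i := c zr)) t" using insert.IH h1 by blast
    have q2: "eval m c (\<rho>(i := zr)) s = eval m c (\<rho>(i := zr)) t" using insert.IH h2 by blast
    show "eval m c \<rho> s = eval m c \<rho> t"
      by (subst (1 2) shannon[where i=i]) (simp only: q1 q2)
  qed
qed

end

fun vars :: "trm \<Rightarrow> nat set" where
  "vars (Var i) = {i}"
| "vars (Meet s t) = vars s \<union> vars t"
| "vars (Cmp s) = vars s"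

lemma finite_vars: "finite (vars t)"
  by (induction t) auto

lemma eval_cong: "(\<forall>i\<in>vars t. \<rho> i = \<sigma> i) \<Longrightarrow> eval m c \<rho> t = eval m c \<sigma> t"
  by (induction t) auto

lemma (in ba2) in_BA: "in_BA m c"
  unfolding in_BA_def sat_def
proof (intro allI impI)
  fix e :: eqn and \<rho> :: "nat \<Rightarrow> 'a"
  assume sat: "\<forall>\<sigma>. eval (\<and>) Not \<sigma> (fst e) = eval (\<and>) Not \<sigma> (snd e)"
  define S where "S = vars (fst e) \<union> vars (snd e)"
  define \<sigma> where "\<sigma> = (\<lambda>i. if i \<in> S then \<rho> i else zr)"
  have fS: "finite S" unfolding S_def by (simp add: finite_vars)
  have "eval m c \<sigma> (fst e) = eval m c \<sigma> (snd e)"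
    using finite_case[OF sat fS] unfolding \<sigma>_def by auto
  moreover have "eval m c \<rho> (fst e) = eval m c \<sigma> (fst e)"
    by (rule eval_cong) (simp add: \<sigma>_def S_def)
  moreover have "eval m c \<rho> (snd e) = eval m c \<sigma> (snd e)"
    by (rule eval_cong) (simp add: \<sigma>_def S_def)
  ultimately show "eval m c \<rho> (fst e) = eval m c \<rho> (snd e)" by simp
qed

lemma models_imp_ba2:
  assumes "models m c {A6, J5'}"
  shows "ba2 m c"
proof
  have s1: "sat m c A6" and s2: "sat m c J5'" using assms by (auto simp: models_def)
  fix x y z
  show "m x (m y z) = m y (m z x)"
    using s1 unfolding sat_def A6_def
    by (drule_tac x="\<lambda>n. if n = 0 then x else if n = 1 then y else z" in spec) simp
  show "x = m (c (m (c x) y)) (c (m (c x) (c y)))"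
    using s2 unfolding sat_def J5'_def
    by (drule_tac x="\<lambda>n. if n = 0 then x else y" in spec) simp
qed

lemma BA_sat_A6: "sat (\<and>) Not A6" by (auto simp: sat_def A6_def)
lemma BA_sat_J5: "sat (\<and>) Not J5'" by (auto simp: sat_def J5'_def)

lemma part1: "models m c {A6, J5'} \<longleftrightarrow> in_BA m c"
proof
  assume "models m c {A6, J5'}"
  then show "in_BA m c" using models_imp_ba2 ba2.in_BA by blast
next
  assume "in_BA m c"
  then show "models m c {A6, J5'}"
    unfolding in_BA_def models_def using BA_sat_A6 BA_sat_J5 by blast
qed

lemma A6_ne_J5: "A6 \<noteq> J5'" by (simp add: A6_def J5'_def)

lemma not_follows_A6: "\<not> follows {J5'} A6"
proof
  assume "follows {J5'} A6"
  moreover have "algebra_on {0::nat,1} (\<lambda>x y. x) (\<lambda>x. x)" by (simp add: algebra_on_def)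
  moreover have "sat_on {0::nat,1} (\<lambda>x y. x) (\<lambda>x. x) J5'" by (simp add: sat_on_def J5'_def)
  ultimately have "sat_on {0::nat,1} (\<lambda>x y. x) (\<lambda>x. x) A6" unfolding follows_def by blast
  then have "\<forall>\<rho>::nat \<Rightarrow> nat. (\<forall>i. \<rho> i \<in> {0::nat,1}) \<longrightarrow> \<rho> 0 = \<rho> 1" unfolding sat_on_def A6_def by simp
  then show False by (erule_tac x="\<lambda>n. if n = 0 then 0::nat else 1" in allE) (auto split: if_splits)
qed

lemma not_follows_J5: "\<not> follows {A6} J5'"
proof
  assume "follows {A6} J5'"
  moreover have "algebra_on {0::nat,1} (\<lambda>x y. 0) (\<lambda>x. x)" by (simp add: algebra_on_def)
  moreover have "sat_on {0::nat,1} (\<lambda>x y. 0) (\<lambda>x. x) A6" by (simp add: sat_on_def A6_def)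
  ultimately have "sat_on {0::nat,1} (\<lambda>x y. 0) (\<lambda>x. x) J5'" unfolding follows_def by blast
  then have "\<forall>\<rho>::nat \<Rightarrow> nat. (\<forall>i. \<rho> i \<in> {0::nat,1}) \<longrightarrow> \<rho> 0 = 0" unfolding sat_on_def J5'_def by simp
  then show False by (erule_tac x="\<lambda>n. 1::nat" in allE) simp
qed

theorem theorem4p1:
  shows "(\<forall>(m::'a \<Rightarrow> 'a \<Rightarrow> 'a) (c::'a \<Rightarrow> 'a). models m c {A6, J5'} \<longleftrightarrow> in_BA m c)
         \<and> independent {A6, J5'} \<and> card {A6, J5'} = 2"
proof (intro conjI allI)
  fix m :: "'a \<Rightarrow> 'a \<Rightarrow> 'a" and c :: "'a \<Rightarrow> 'a"
  show "models m c {A6, J5'} \<longleftrightarrow> in_BA m c" by (rule part1)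
next
  have d1: "{A6, J5'} - {A6} = {J5'}" and d2: "{A6, J5'} - {J5'} = {A6}" using A6_ne_J5 by auto
  show "independent {A6, J5'}"
    unfolding independent_def using d1 d2 not_follows_A6 not_follows_J5 by auto
next
  show "card {A6, J5'} = 2" using A6_ne_J5 by simp
qed

end
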